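(* With notation as in the context, fix distinct $i,j\in\{1,\dots,2r\}$ and let $\rho\in A_1^{[1]}$. Let $u_k=c_k^{\rho}$ ($1\le k\le 8$) be the vertices of the image cycle $C_{ij}^\rho$, and define $a_1,\dots,a_8\in S$ by $u_{k+1}=a_ku_k$ for $1\le k\le 7$ and $u_1=a_8u_8$ (so $a_1=g_i$, $a_8=g_j$). If $z^{\rho}\neq z$, then each element of $S$ that occurs in $(a_1,\dots,a_8)$ occurs exactly twice, the elements $a_1,a_2,a_3,a_4$ are pairwise distinct, and the elements $a_5,a_6,a_7,a_8$ are pairwise distinct.
   Context: Let $r\ge1$ and $G$ an extraspecial $2$-group of order $2^{2r+1}$ (i.e. $|Z(G)|=2$, $G/Z(G)\cong\mathbb{Z}_2^{2r}$), $Z=Z(G)=\langle z\rangle$ identified with $\mathbb{F}_2$, $G/Z$ with quadratic form $Q(Zx)=x^2$ and bilinear form $B(Zx,Zy)=[x,y]$. Assume $\{Zg_1,\dots,Zg_{2r}\}$ is a symmetric basis of $G/Z$ ($Q(Zg_i)=0$, $B(Zg_i,Zg_j)=1$ for $i\ne j$), so $g_i^2=1$ and $g_ig_j=g_jg_iz$ for $i\ne j$. $S=\{g_1,\dots,g_{2r}\}$, $\Gamma=\mathrm{Cay}(G,S)$ (vertex set $G$, edges $\{x,sx\}$), $A=\mathrm{Aut}(\Gamma)$, $N(v)$ the set of neighbours of $v$ (so $N(1)=S$), and $A_v^{[1]}$ the subgroup of $A$ fixing $v$ and every vertex of $N(v)$. For distinct $i,j$, $C_{ij}$ is the $8$-cycle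 with vertices $c_1=1$ and $c_k=s_{k-1}s_{k-2}\cdots s_1$ ($2\le k\le 8$), where $s_k=g_i$ for $k$ odd and $s_k=g_j$ for $k$ even; explicitly $c_1,\dots,c_8=1,\,g_i,\,g_jg_i,\,g_jz,\,z,\,g_iz,\,g_jg_iz,\,g_j$. *)

theory Defs
  imports "HOL-Algebra.Algebra"
begin

definition grp_center :: "('a, 'b) monoid_scheme \<Rightarrow> 'a set" where
  "grp_center G = {x \<in> carrier G. \<forall>y \<in> carrier G. x \<otimes>\<^bsub>G\<^esub> y = y \<otimes>\<^bsub>G\<^esub> x}"

text \<open>Extraspecial 2-group of order 2^(2r+1): |Z(G)| = 2 and G/Z(G) elementary abelian
  (every square and every commutator lies in Z(G)); together with the order this says
  G/Z(G) is isomorphic to Z_2^(2r).\<close>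
definition extraspecial2 :: "('a, 'b) monoid_scheme \<Rightarrow> nat \<Rightarrow> bool" where
  "extraspecial2 G r \<longleftrightarrow> group G \<and> finite (carrier G) \<and> card (carrier G) = 2 ^ (2 * r + 1)
     \<and> card (grp_center G) = 2
     \<and> (\<forall>x \<in> carrier G. x \<otimes>\<^bsub>G\<^esub> x \<in> grp_center G)
     \<and> (\<forall>x \<in> carrier G. \<forall>y \<in> carrier G.
          x \<otimes>\<^bsub>G\<^esub> y \<otimes>\<^bsub>G\<^esub> inv\<^bsub>G\<^esub> x \<otimes>\<^bsub>G\<^esub> inv\<^bsub>G\<^esub> y \<in> grp_center G)"

text \<open>Spanning of G/Z by the cosets Z g_i means G is generated by z and the g_i; since
  |G/Z| = 2^(2r), 2r spanning vectors form a basis.\<close>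
definition symmetric_basis :: "('a, 'b) monoid_scheme \<Rightarrow> nat \<Rightarrow> 'a \<Rightarrow> (nat \<Rightarrow> 'a) \<Rightarrow> bool" where
  "symmetric_basis G r z g \<longleftrightarrow>
     grp_center G = {\<one>\<^bsub>G\<^esub>, z} \<and> z \<noteq> \<one>\<^bsub>G\<^esub>
     \<and> (\<forall>i \<in> {1..2*r}. g i \<in> carrier G)
     \<and> generate G (insert z (g ` {1..2*r})) = carrier G
     \<and> (\<forall>i \<in> {1..2*r}. g i \<otimes>\<^bsub>G\<^esub> g i = \<one>\<^bsub>G\<^esub>)
     \<and> (\<forall>i \<in> {1..2*r}. \<forall>j \<in> {1..2*r}. i \<noteq> j \<longrightarrow>
          g i \<otimes>\<^bsub>G\<^esub> g j = g j \<otimes>\<^bsub>G\<^esub> g i \<otimes>\<^bsub>G\<^esub> z)"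

definition cay_adj :: "('a, 'b) monoid_scheme \<Rightarrow> 'a set \<Rightarrow> 'a \<Rightarrow> 'a \<Rightarrow> bool" where
  "cay_adj G S x y \<longleftrightarrow> x \<in> carrier G \<and> y \<in> carrier G \<and>
     (\<exists>s \<in> S. y = s \<otimes>\<^bsub>G\<^esub> x \<or> x = s \<otimes>\<^bsub>G\<^esub> y)"

definition cay_aut :: "('a, 'b) monoid_scheme \<Rightarrow> 'a set \<Rightarrow> ('a \<Rightarrow> 'a) \<Rightarrow> bool" where
  "cay_aut G S \<rho> \<longleftrightarrow> bij_betw \<rho> (carrier G) (carrier G) \<and>
     (\<forall>x \<in> carrier G. \<forall>y \<in> carrier G. cay_adj G S x y \<longleftrightarrow> cay_adj G S (\<rho> x) (\<rho> y))"

definition nbhd :: "('a, 'b) monoid_scheme \<Rightarrow> 'a set \<Rightarrow> 'a \<Rightarrow> 'a set" where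
  "nbhd G S v = {w. cay_adj G S v w}"

definition stab1 :: "('a, 'b) monoid_scheme \<Rightarrow> 'a set \<Rightarrow> 'a \<Rightarrow> ('a \<Rightarrow> 'a) set" where
  "stab1 G S v = {\<rho>. cay_aut G S \<rho> \<and> \<rho> v = v \<and> (\<forall>w \<in> nbhd G S v. \<rho> w = w)}"

text \<open>The 8-cycle C_ij as list [c_1,...,c_8] (0-indexed in the list).\<close>
definition cyc8 :: "('a, 'b) monoid_scheme \<Rightarrow> 'a \<Rightarrow> 'a \<Rightarrow> 'a \<Rightarrow> 'a list" where
  "cyc8 G z gi gj = [\<one>\<^bsub>G\<^esub>, gi, gj \<otimes>\<^bsub>G\<^esub> gi, gj \<otimes>\<^bsub>G\<^esub> z, z, gi \<otimes>\<^bsub>G\<^esub> z,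
                     gj \<otimes>\<^bsub>G\<^esub> gi \<otimes>\<^bsub>G\<^esub> z, gj]"

end

theory Submission
  imports Defs
begin

locale esx = group G for G (structure) +
  fixes S :: "'a set" and z :: 'a
  assumes zc: "z \<in> carrier G"
    and zcomm: "\<And>x. x \<in> carrier G \<Longrightarrow> z \<otimes> x = x \<otimes> z"
    and z1: "z \<noteq> \<one>" and zz: "z \<otimes> z = \<one>"
    and Sc: "\<And>s. s\<in>S \<Longrightarrow> s \<in> carrier G"
    and Sinv: "\<And>s. s\<in>S \<Longrightarrow> s \<otimes> s = \<one>"
    and Santi: "\<And>s t. s\<in>S \<Longrightarrow> t\<in>S \<Longrightarrow> s\<noteq>t \<Longrightarrow> s \<otimes> t = t \<otimes> s \<otimes> z"
begin

lemma swap: assumes a: "s\<in>S" "t\<in>S" "s\<noteq>t" shows "s \<otimes> t \<otimes> z = t \<otimes> s"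
proof -
  have "s\<otimes>t\<otimes>z = t\<otimes>s\<otimes>z\<otimes>z" using Santi[OF a] by simp
  also have "\<dots> = t\<otimes>s\<otimes>(z\<otimes>z)" using a by (simp add: m_assoc Sc zc)
  finally show ?thesis by (simp add: zz a Sc)
qed

lemma sts: assumes a: "s\<in>S" "t\<in>S" "s\<noteq>t" shows "s\<otimes>t\<otimes>s = t\<otimes>z"
proof -
  have "s\<otimes>t\<otimes>s = t\<otimes>s\<otimes>z\<otimes>s" using Santi[OF a] by simp
  also have "\<dots> = t\<otimes>s\<otimes>(z\<otimes>s)" using a by (simp add: m_assoc Sc zc)
  also have "\<dots> = t\<otimes>s\<otimes>(s\<otimes>z)" using a by (simp add: zcomm Sc)
  also have "\<dots> = t\<otimes>(s\<otimes>s)\<otimes>z" using a by (simp add: m_assoc Sc zc)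
  finally show ?thesis using a by (simp add: Sinv Sc)
qed

lemma notSS: assumes a: "s\<in>S" "t\<in>S" shows "s\<otimes>t \<noteq> z"
proof
  assume e: "s\<otimes>t = z"
  show False
  proof (cases "s = t")
    case True thus ?thesis using e z1 Sinv a by simp
  next
    case False
    hence "t\<otimes>s\<otimes>z = z" using Santi[OF a False] e zc by simp
    hence ts: "t\<otimes>s = \<one>" using a by (simp add: Sc zc)
    have "s = t\<otimes>t\<otimes>s" using a by (simp add: Sinv Sc)
    also have "\<dots> = t" using ts a by (simp add: m_assoc Sc)
    finally show False using False by simp
  qed
qed

lemma sgn: assumes "b\<in>S" "g\<in>S" shows "b\<otimes>g = g\<otimes>b\<otimes>(if g=b then \<one> else z)"
  using assms Santi[of b g] by (auto simp: Sc)

lemma step: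
  assumes c: "x\<in>carrier G" "y\<in>carrier G" "g\<in>carrier G" and ef: "e\<in>{\<one>,z}" "f\<in>{\<one>,z}"
    and hx: "x\<otimes>g = g\<otimes>x\<otimes>e" and hy: "y\<otimes>g = g\<otimes>y\<otimes>f"
  shows "x\<otimes>y\<otimes>g = g\<otimes>(x\<otimes>y)\<otimes>(e\<otimes>f)"
proof -
  have ec: "e \<in> carrier G" "f \<in> carrier G" using ef zc by auto
  have ey: "e\<otimes>y = y\<otimes>e" using ef c zcomm by auto
  have "x\<otimes>y\<otimes>g = x\<otimes>(y\<otimes>g)" using c by (simp add: m_assoc)
  also have "\<dots> = (x\<otimes>g)\<otimes>y\<otimes>f" using c ec hy by (simp add: m_assoc)
  also have "\<dots> = g\<otimes>x\<otimes>(e\<otimes>y)\<otimes>f" using c ec hx by (simp add: m_assoc)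
  also have "\<dots> = g\<otimes>x\<otimes>(y\<otimes>e)\<otimes>f" using ey by simp
  also have "\<dots> = g\<otimes>(x\<otimes>y)\<otimes>(e\<otimes>f)" using c ec by (simp add: m_assoc)
  finally show ?thesis .
qed

lemma prod4:
  assumes b: "b1\<in>S" "b2\<in>S" "b3\<in>S" "b4\<in>S" "g\<in>S" and d: "distinct [b1,b2,b3,b4]"
  shows "b1\<otimes>b2\<otimes>b3\<otimes>b4\<otimes>g = g\<otimes>(b1\<otimes>b2\<otimes>b3\<otimes>b4)\<otimes>(if g\<in>{b1,b2,b3,b4} then z else \<one>)"
proof -
  define e where "e b = (if g=b then \<one> else z)" for b
  have ee: "e b \<in> {\<one>,z}" for b unfolding e_def by auto
  have h: "b\<otimes>g = g\<otimes>b\<otimes>e b" if "b\<in>S" for b using sgn[OF that b(5)] unfolding e_def .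
  note bc = Sc[OF b(1)] Sc[OF b(2)] Sc[OF b(3)] Sc[OF b(4)] Sc[OF b(5)]
  have ec: "e b \<in> carrier G" for b using ee[of b] zc by auto
  have eez: "e b \<otimes> e c \<in> {\<one>,z}" for b c unfolding e_def using zz zc by auto
  have eez3: "e b \<otimes> e c \<otimes> e d \<in> {\<one>,z}" for b c d unfolding e_def using zz zc by auto
  have 2: "b1\<otimes>b2\<otimes>g = g\<otimes>(b1\<otimes>b2)\<otimes>(e b1\<otimes>e b2)"
    by (rule step[OF bc(1,2,5) ee ee h[OF b(1)] h[OF b(2)]])
  have 3: "b1\<otimes>b2\<otimes>b3\<otimes>g = g\<otimes>(b1\<otimes>b2\<otimes>b3)\<otimes>(e b1\<otimes>e b2\<otimes>e b3)"
    by (rule step[OF m_closed[OF bc(1,2)] bc(3,5) eez ee 2 h[OF b(3)]])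
  have 4: "b1\<otimes>b2\<otimes>b3\<otimes>b4\<otimes>g = g\<otimes>(b1\<otimes>b2\<otimes>b3\<otimes>b4)\<otimes>(e b1\<otimes>e b2\<otimes>e b3\<otimes>e b4)"
    by (rule step[OF m_closed[OF m_closed[OF bc(1,2)] bc(3)] bc(4,5) eez3 ee 3 h[OF b(4)]])
  have "e b1\<otimes>e b2\<otimes>e b3\<otimes>e b4 = (if g\<in>{b1,b2,b3,b4} then z else \<one>)"
    using d zz zc unfolding e_def by auto
  with 4 show ?thesis by simp
qed

lemma nd:
  assumes b: "b1\<in>S" "b2\<in>S" "b3\<in>S" "b4\<in>S"
    and nz: "b1\<otimes>b2\<otimes>b3\<otimes>b4 \<noteq> z" and nss: "\<forall>s\<in>S. \<forall>t\<in>S. b1\<otimes>b2\<otimes>b3\<otimes>b4 \<noteq> s\<otimes>t"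
  shows "distinct [b1,b2,b3,b4]"
proof -
  note c = Sc[OF b(1)] Sc[OF b(2)] Sc[OF b(3)] Sc[OF b(4)]
  have 12: "b1\<noteq>b2"
  proof
    assume e: "b1=b2"
    have "b1\<otimes>b2\<otimes>b3\<otimes>b4 = b3\<otimes>b4" using e b c by (simp add: Sinv)
    thus False using nss b by blast
  qed
  have 23: "b2\<noteq>b3"
  proof
    assume e: "b2=b3"
    have "b1\<otimes>b2\<otimes>b3\<otimes>b4 = b1\<otimes>(b2\<otimes>b3)\<otimes>b4" using c by (simp add: m_assoc)
    also have "\<dots> = b1\<otimes>b4" using e b c by (simp add: Sinv)
    finally show False using nss b by blast
  qed
  have 34: "b3\<noteq>b4"
  proof
    assume e: "b3=b4"
    have "b1\<otimes>b2\<otimes>b3\<otimes>b4 = b1\<otimes>b2\<otimes>(b3\<otimes>b4)" using c by (simp add: m_assoc)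
    also have "\<dots> = b1\<otimes>b2" using e b c by (simp add: Sinv)
    finally show False using nss b by blast
  qed
  have 13: "b1\<noteq>b3"
  proof
    assume e: "b1=b3"
    have "b1\<otimes>b2\<otimes>b3\<otimes>b4 = b2\<otimes>z\<otimes>b4" using sts[OF b(1,2) 12] e by simp
    also have "\<dots> = b2\<otimes>b4\<otimes>z" using c zc zcomm by (simp add: m_assoc)
    finally have eq: "b1\<otimes>b2\<otimes>b3\<otimes>b4 = b2\<otimes>b4\<otimes>z" .
    show False
    proof (cases "b2=b4")
      case True thus False using eq nz b c by (simp add: Sinv zc)
    next
      case False
      hence "b1\<otimes>b2\<otimes>b3\<otimes>b4 = b4\<otimes>b2" using eq swap[OF b(2,4) False] by simp
      thus False using nss b(2,4) by auto
    qed
  qed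
  have 24: "b2\<noteq>b4"
  proof
    assume e: "b2=b4"
    have "b1\<otimes>b2\<otimes>b3\<otimes>b4 = b1\<otimes>(b2\<otimes>b3\<otimes>b2)" using c e by (simp add: m_assoc)
    also have "\<dots> = b1\<otimes>b3\<otimes>z" using sts[OF b(2,3) 23] c zc by (simp add: m_assoc)
    finally have eq: "b1\<otimes>b2\<otimes>b3\<otimes>b4 = b1\<otimes>b3\<otimes>z" .
    show False
    proof (cases "b1=b3")
      case True thus False using eq nz b c by (simp add: Sinv zc)
    next
      case False
      hence "b1\<otimes>b2\<otimes>b3\<otimes>b4 = b3\<otimes>b1" using eq swap[OF b(1,3) False] by simp
      thus False using nss b(1,3) by auto
    qed
  qed
  have 14: "b1\<noteq>b4"
  proof
    assume e: "b1=b4"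
    have "b1\<otimes>b2\<otimes>b3\<otimes>b4 = b2\<otimes>b1\<otimes>z\<otimes>b3\<otimes>b1" using Santi[OF b(1,2) 12] e by simp
    also have "\<dots> = b2\<otimes>(b1\<otimes>b3\<otimes>b1)\<otimes>z" using c zc zcomm by (simp add: m_assoc)
    also have "\<dots> = b2\<otimes>b3\<otimes>(z\<otimes>z)" using sts[OF b(1,3) 13] c zc by (simp add: m_assoc)
    finally have "b1\<otimes>b2\<otimes>b3\<otimes>b4 = b2\<otimes>b3" using zz c by simp
    thus False using nss b by blast
  qed
  show ?thesis using 12 13 14 23 24 34 by simp
qed


lemma adj_S: assumes "cay_adj G S x y" shows "y \<otimes> inv x \<in> S"
proof -
  from assms obtain s where s: "s\<in>S" "y = s\<otimes>x \<or> x = s\<otimes>y" and c: "x\<in>carrier G" "y\<in>carrier G"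
    unfolding cay_adj_def by blast
  have "y = s\<otimes>x"
  proof (cases "y = s\<otimes>x")
    case False
    hence "x = s\<otimes>y" using s by blast
    hence "s\<otimes>x = s\<otimes>s\<otimes>y" using s c Sc by (simp add: m_assoc)
    thus ?thesis using s c Sinv by simp
  qed
  thus ?thesis using s c Sc by (simp add: m_assoc)
qed

lemma aut_step: assumes "cay_aut G S \<rho>" "x\<in>carrier G" "s\<in>S"
  shows "\<rho> (s\<otimes>x) \<otimes> inv (\<rho> x) \<in> S"
proof -
  have "cay_adj G S x (s\<otimes>x)" using assms Sc unfolding cay_adj_def by auto
  hence "cay_adj G S (\<rho> x) (\<rho> (s\<otimes>x))" using assms Sc unfolding cay_aut_def by auto
  thus ?thesis by (rule adj_S)
qed

lemma rho_ss: assumes "cay_aut G S \<rho>" "\<forall>t\<in>S. \<rho> t = t" "s\<in>S" "t\<in>S"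
  shows "\<rho> z \<noteq> s \<otimes> t"
proof
  assume e: "\<rho> z = s\<otimes>t"
  have "cay_adj G S t (s\<otimes>t)" using assms Sc unfolding cay_adj_def by auto
  hence "cay_adj G S (\<rho> t) (\<rho> z)" using assms e by simp
  hence "cay_adj G S t z" using assms zc Sc unfolding cay_aut_def by auto
  hence "z \<otimes> inv t \<in> S" by (rule adj_S)
  then obtain s' where s': "s'\<in>S" "z\<otimes>inv t = s'" by blast
  hence "z = s'\<otimes>t" using assms(4) Sc zc by (simp add: inv_solve_right')
  thus False using notSS[OF s'(1) assms(4)] by simp
qed


lemma sign_eq:
  assumes b: "b1\<in>S" "b2\<in>S" "b3\<in>S" "b4\<in>S" and c: "c1\<in>S" "c2\<in>S" "c3\<in>S" "c4\<in>S"
    and d: "distinct [b1,b2,b3,b4]" "distinct [c1,c2,c3,c4]"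
    and p: "(b1\<otimes>b2\<otimes>b3\<otimes>b4) \<otimes> (c1\<otimes>c2\<otimes>c3\<otimes>c4) = \<one>" and g: "g\<in>S"
  shows "g\<in>{b1,b2,b3,b4} \<longleftrightarrow> g\<in>{c1,c2,c3,c4}"
proof -
  define e where "e = (if g\<in>{b1,b2,b3,b4} then z else \<one>)"
  define f where "f = (if g\<in>{c1,c2,c3,c4} then z else \<one>)"
  define P where "P = b1\<otimes>b2\<otimes>b3\<otimes>b4"
  define Q where "Q = c1\<otimes>c2\<otimes>c3\<otimes>c4"
  have gc: "g \<in> carrier G" using g Sc by auto
  have ec: "e \<in> carrier G" "f \<in> carrier G" unfolding e_def f_def using zc by auto
  have "P \<otimes> Q \<otimes> g = g \<otimes> (P \<otimes> Q) \<otimes> (e \<otimes> f)"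
  proof (rule step)
    show "P \<in> carrier G" "Q \<in> carrier G" "g \<in> carrier G"
      unfolding P_def Q_def using b c g Sc by auto
    show "e \<in> {\<one>,z}" "f \<in> {\<one>,z}" unfolding e_def f_def by auto
  qed (unfold P_def Q_def e_def f_def, rule prod4[OF b g d(1)], rule prod4[OF c g d(2)])
  hence "g = g \<otimes> (e \<otimes> f)" using p gc unfolding P_def[symmetric] Q_def[symmetric] by simp
  hence ef: "e \<otimes> f = \<one>" using gc ec by simp
  show ?thesis
  proof (cases "g\<in>{b1,b2,b3,b4}"; cases "g\<in>{c1,c2,c3,c4}")
  qed (use ef z1 zc zz in \<open>simp_all only: e_def f_def if_True if_False l_one r_one\<close>)
qed

end

lemma count2: assumes "distinct l1" "distinct l2" "x \<in> set l1 \<longleftrightarrow> x \<in> set l2" "x \<in> set (l1@l2)"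
  shows "count_list (l1@l2) x = 2"
proof -
  have h: "distinct l \<Longrightarrow> count_list l x = (if x \<in> set l then 1 else 0)" for l
    by (induction l) auto
  have "x\<in>set l1" "x\<in>set l2" using assms(3,4) by auto
  thus ?thesis using assms(1,2) h[of l1] h[of l2] by simp
qed


lemma (in esx) tele: "x\<in>carrier G \<Longrightarrow> y\<in>carrier G \<Longrightarrow> w\<in>carrier G \<Longrightarrow>
  (x \<otimes> inv y) \<otimes> (y \<otimes> inv w) = x \<otimes> inv w"
  by (simp add: m_assoc[symmetric]) (simp add: m_assoc)

lemma (in esx) Sinv': "s \<in> S \<Longrightarrow> inv s = s"
  using Sinv Sc inv_equality by blast

lemma (in esx) main:
  assumes aut: "cay_aut G S \<rho>" and r1: "\<rho> \<one> = \<one>" and rS: "\<forall>t\<in>S. \<rho> t = t"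
    and giS: "gi \<in> S" and gjS: "gj \<in> S" and gij: "gi \<noteq> gj" and rz: "\<rho> z \<noteq> z"
  shows "let u = map \<rho> (cyc8 G z gi gj);
             a = map (\<lambda>k. u ! ((k + 1) mod 8) \<otimes> inv (u ! k)) [0..<8]
         in set a \<subseteq> S
            \<and> (\<forall>s \<in> S. s \<in> set a \<longrightarrow> count_list a s = 2)
            \<and> distinct (take 4 a) \<and> distinct (drop 4 a)"
proof -
  have rc: "\<And>x. x \<in> carrier G \<Longrightarrow> \<rho> x \<in> carrier G"
    using aut unfolding cay_aut_def bij_betw_def by auto
  have gic: "gi \<in> carrier G" and gjc: "gj \<in> carrier G" using giS gjS Sc by auto
  have rgi: "\<rho> gi = gi" and rgj: "\<rho> gj = gj" using rS giS gjS by auto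
  define U3 where "U3 = \<rho> (gj \<otimes> gi)"
  define U4 where "U4 = \<rho> (gj \<otimes> z)"
  define U5 where "U5 = \<rho> z"
  define U6 where "U6 = \<rho> (gi \<otimes> z)"
  define U7 where "U7 = \<rho> (gj \<otimes> gi \<otimes> z)"
  have Uc: "U3 \<in> carrier G" "U4 \<in> carrier G" "U5 \<in> carrier G" "U6 \<in> carrier G" "U7 \<in> carrier G"
    unfolding U3_def U4_def U5_def U6_def U7_def using rc gic gjc zc by auto
  define A1 where "A1 = gi \<otimes> inv \<one>"
  define A2 where "A2 = U3 \<otimes> inv gi"
  define A3 where "A3 = U4 \<otimes> inv U3"
  define A4 where "A4 = U5 \<otimes> inv U4"
  define A5 where "A5 = U6 \<otimes> inv U5"
  define A6 where "A6 = U7 \<otimes> inv U6"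
  define A7 where "A7 = gj \<otimes> inv U7"
  define A8 where "A8 = \<one> \<otimes> inv gj"
  have u: "map \<rho> (cyc8 G z gi gj) = [\<one>, gi, U3, U4, U5, U6, U7, gj]"
    unfolding cyc8_def U3_def U4_def U5_def U6_def U7_def using r1 rgi rgj by simp
  have a: "map (\<lambda>k. [\<one>, gi, U3, U4, U5, U6, U7, gj] ! ((k + 1) mod 8) \<otimes> inv ([\<one>, gi, U3, U4, U5, U6, U7, gj] ! k)) [0..<8]
     = [A1,A2,A3,A4,A5,A6,A7,A8]"
    unfolding A1_def A2_def A3_def A4_def A5_def A6_def A7_def A8_def by (simp add: upt_rec)
  have step: "\<rho> (s \<otimes> x) \<otimes> inv (\<rho> x) \<in> S" if "x \<in> carrier G" "s \<in> S" for x s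
    using aut_step[OF aut that] .
  have A1S: "A1 \<in> S" using giS gic unfolding A1_def by simp
  have A2S: "A2 \<in> S" using step[OF gic gjS] rgi unfolding A2_def U3_def by simp
  have e3: "gi \<otimes> (gj \<otimes> gi) = gj \<otimes> z" using sts[OF giS gjS gij] gic gjc by (simp add: m_assoc)
  have A3S: "A3 \<in> S" using step[OF m_closed[OF gjc gic] giS] unfolding A3_def U3_def U4_def e3 .
  have e4: "gj \<otimes> (gj \<otimes> z) = z" using Sinv[OF gjS] gjc zc by (simp add: m_assoc[symmetric])
  have A4S: "A4 \<in> S" using step[OF m_closed[OF gjc zc] gjS] unfolding A4_def U4_def U5_def e4 .
  have A5S: "A5 \<in> S" using step[OF zc giS] unfolding A5_def U5_def U6_def .
  have e6: "gj \<otimes> (gi \<otimes> z) = gj \<otimes> gi \<otimes> z" using gic gjc zc by (simp add: m_assoc)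
  have A6S: "A6 \<in> S" using step[OF m_closed[OF gic zc] gjS] unfolding A6_def U6_def U7_def e6 .
  have e7: "gi \<otimes> (gj \<otimes> gi \<otimes> z) = gj"
  proof -
    have "gi \<otimes> (gj \<otimes> gi \<otimes> z) = gi \<otimes> (gj \<otimes> gi) \<otimes> z" using gic gjc zc by (simp add: m_assoc)
    also have "\<dots> = gj \<otimes> (z \<otimes> z)" using e3 gjc zc by (simp add: m_assoc)
    finally show ?thesis using zz gjc by simp
  qed
  have A7S: "A7 \<in> S" using step[OF m_closed[OF m_closed[OF gjc gic] zc] giS] rgj unfolding A7_def U7_def e7 by simp
  have A8S: "A8 \<in> S" using step[OF gjc gjS] rgj r1 Sinv[OF gjS] unfolding A8_def by simp
  have P: "A4 \<otimes> A3 \<otimes> A2 \<otimes> A1 = U5"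
    unfolding A1_def A2_def A3_def A4_def using Uc gic by (simp add: tele m_assoc)
  have Q: "A8 \<otimes> A7 \<otimes> A6 \<otimes> A5 = inv U5"
  proof -
    have q1: "A8 \<otimes> A7 = \<one> \<otimes> inv U7" unfolding A8_def A7_def by (rule tele[OF one_closed gjc Uc(5)])
    have q2: "A8 \<otimes> A7 \<otimes> A6 = \<one> \<otimes> inv U6" unfolding q1 A6_def by (rule tele[OF one_closed Uc(5) Uc(4)])
    have q3: "A8 \<otimes> A7 \<otimes> A6 \<otimes> A5 = \<one> \<otimes> inv U5" unfolding q2 A5_def by (rule tele[OF one_closed Uc(4) Uc(3)])
    thus ?thesis using Uc by simp
  qed
  have rss: "U5 \<noteq> s \<otimes> t" if "s\<in>S" "t\<in>S" for s t
    unfolding U5_def by (rule rho_ss[OF aut rS that])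
  have d1: "distinct [A4,A3,A2,A1]"
  proof (rule nd[OF A4S A3S A2S A1S])
    show "A4 \<otimes> A3 \<otimes> A2 \<otimes> A1 \<noteq> z" using P rz unfolding U5_def by simp
    show "\<forall>s\<in>S. \<forall>t\<in>S. A4 \<otimes> A3 \<otimes> A2 \<otimes> A1 \<noteq> s \<otimes> t" using P rss by simp
  qed
  have invz: "inv z = z" using zz zc inv_equality by blast
  have d2: "distinct [A8,A7,A6,A5]"
  proof (rule nd[OF A8S A7S A6S A5S])
    show "A8 \<otimes> A7 \<otimes> A6 \<otimes> A5 \<noteq> z"
    proof
      assume "A8 \<otimes> A7 \<otimes> A6 \<otimes> A5 = z"
      hence "inv (inv U5) = inv z" using Q by simp
      thus False using Uc invz rz unfolding U5_def by simp
    qed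
    show "\<forall>s\<in>S. \<forall>t\<in>S. A8 \<otimes> A7 \<otimes> A6 \<otimes> A5 \<noteq> s \<otimes> t"
    proof (intro ballI notI)
      fix s t assume st: "s\<in>S" "t\<in>S" "A8 \<otimes> A7 \<otimes> A6 \<otimes> A5 = s \<otimes> t"
      hence "inv (inv U5) = inv (s \<otimes> t)" using Q by simp
      hence "U5 = t \<otimes> s" using Uc st Sc Sinv' by (simp add: inv_mult_group)
      thus False using rss st by blast
    qed
  qed
  have PQ: "(A4 \<otimes> A3 \<otimes> A2 \<otimes> A1) \<otimes> (A8 \<otimes> A7 \<otimes> A6 \<otimes> A5) = \<one>" using P Q Uc by simp
  have mem: "x \<in> {A4,A3,A2,A1} \<longleftrightarrow> x \<in> {A8,A7,A6,A5}" if "x \<in> S" for x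
    by (rule sign_eq[OF A4S A3S A2S A1S A8S A7S A6S A5S d1 d2 PQ that])
  define L where "L = [A1,A2,A3,A4,A5,A6,A7,A8]"
  have tk: "take 4 L = [A1,A2,A3,A4]" and dp: "drop 4 L = [A5,A6,A7,A8]" unfolding L_def by simp_all
  have LL: "L = take 4 L @ drop 4 L" by simp
  have "set L \<subseteq> S" unfolding L_def using A1S A2S A3S A4S A5S A6S A7S A8S by simp
  moreover have "distinct (take 4 L)" "distinct (drop 4 L)" unfolding tk dp using d1 d2 by auto
  moreover have "\<forall>s \<in> S. s \<in> set L \<longrightarrow> count_list L s = 2"
  proof (intro ballI impI)
    fix s assume s: "s \<in> S" "s \<in> set L"
    have "s \<in> set (take 4 L) \<longleftrightarrow> s \<in> set (drop 4 L)" unfolding tk dp using mem[OF s(1)] by auto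
    moreover have "s \<in> set (take 4 L @ drop 4 L)" using s(2) LL by simp
    ultimately have "count_list (take 4 L @ drop 4 L) s = 2"
      by (rule count2[OF \<open>distinct (take 4 L)\<close> \<open>distinct (drop 4 L)\<close>])
    thus "count_list L s = 2" using LL by simp
  qed
  ultimately show ?thesis unfolding Let_def u a L_def[symmetric] by blast
qed

theorem lemma4p6:
  fixes G :: "('a, 'b) monoid_scheme" and r :: nat and z :: 'a and g :: "nat \<Rightarrow> 'a"
    and i j :: nat and \<rho> :: "'a \<Rightarrow> 'a"
  assumes "r \<ge> 1"
    and "extraspecial2 G r"
    and "symmetric_basis G r z g"
    and "i \<in> {1..2*r}" and "j \<in> {1..2*r}" and "i \<noteq> j"
    and "\<rho> \<in> stab1 G (g ` {1..2*r}) \<one>\<^bsub>G\<^esub>"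
    and "\<rho> z \<noteq> z"
  shows "let S = g ` {1..2*r};
             u = map \<rho> (cyc8 G z (g i) (g j));
             a = map (\<lambda>k. u ! ((k + 1) mod 8) \<otimes>\<^bsub>G\<^esub> inv\<^bsub>G\<^esub> (u ! k)) [0..<8]
         in set a \<subseteq> S
            \<and> (\<forall>s \<in> S. s \<in> set a \<longrightarrow> count_list a s = 2)
            \<and> distinct (take 4 a) \<and> distinct (drop 4 a)"
proof -
  interpret group G using assms(2) unfolding extraspecial2_def by blast
  note sb = assms(3)[unfolded symmetric_basis_def]
  have cen: "grp_center G = {\<one>\<^bsub>G\<^esub>, z}" using sb by (rule conjunct1)
  have z1: "z \<noteq> \<one>\<^bsub>G\<^esub>" using sb[THEN conjunct2] by (rule conjunct1)
  have gc: "\<forall>i \<in> {1..2*r}. g i \<in> carrier G" using sb[THEN conjunct2, THEN conjunct2] by (rule conjunct1)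
  have ginv: "\<forall>i \<in> {1..2*r}. g i \<otimes>\<^bsub>G\<^esub> g i = \<one>\<^bsub>G\<^esub>" using sb[THEN conjunct2, THEN conjunct2, THEN conjunct2, THEN conjunct2] by (rule conjunct1)
  have ganti: "\<forall>i \<in> {1..2*r}. \<forall>j \<in> {1..2*r}. i \<noteq> j \<longrightarrow> g i \<otimes>\<^bsub>G\<^esub> g j = g j \<otimes>\<^bsub>G\<^esub> g i \<otimes>\<^bsub>G\<^esub> z"
    using sb[THEN conjunct2, THEN conjunct2, THEN conjunct2, THEN conjunct2] by (rule conjunct2)
  have zcen: "z \<in> grp_center G" by (simp add: cen)
  hence zc: "z \<in> carrier G" unfolding grp_center_def by simp
  have zcomm: "\<And>x. x \<in> carrier G \<Longrightarrow> z \<otimes>\<^bsub>G\<^esub> x = x \<otimes>\<^bsub>G\<^esub> z"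
    using zcen unfolding grp_center_def by simp
  have "z \<otimes>\<^bsub>G\<^esub> z \<in> grp_center G"
    unfolding grp_center_def
  proof (intro CollectI conjI ballI)
    show "z \<otimes>\<^bsub>G\<^esub> z \<in> carrier G" using zc by simp
    fix y assume y: "y \<in> carrier G"
    have "z \<otimes>\<^bsub>G\<^esub> z \<otimes>\<^bsub>G\<^esub> y = z \<otimes>\<^bsub>G\<^esub> (y \<otimes>\<^bsub>G\<^esub> z)" using zc y zcomm[OF y] by (simp add: m_assoc)
    also have "\<dots> = y \<otimes>\<^bsub>G\<^esub> (z \<otimes>\<^bsub>G\<^esub> z)" using zc y zcomm[OF y] by (simp add: m_assoc[symmetric])
    finally show "z \<otimes>\<^bsub>G\<^esub> z \<otimes>\<^bsub>G\<^esub> y = y \<otimes>\<^bsub>G\<^esub> (z \<otimes>\<^bsub>G\<^esub> z)" .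
  qed
  hence "z \<otimes>\<^bsub>G\<^esub> z \<in> {\<one>\<^bsub>G\<^esub>, z}" by (simp only: cen)
  hence zz0: "z \<otimes>\<^bsub>G\<^esub> z = \<one>\<^bsub>G\<^esub> \<or> z \<otimes>\<^bsub>G\<^esub> z = z" by simp
  have zz: "z \<otimes>\<^bsub>G\<^esub> z = \<one>\<^bsub>G\<^esub>"
  proof (rule ccontr)
    assume "z \<otimes>\<^bsub>G\<^esub> z \<noteq> \<one>\<^bsub>G\<^esub>"
    hence "z \<otimes>\<^bsub>G\<^esub> z = z" using zz0 by simp
    hence "z = \<one>\<^bsub>G\<^esub>" using zc by simp
    thus False using z1 by simp
  qed
  define S where "S = g ` {1..2*r}"
  have X: "esx G S z"
  proof (intro esx.intro esx_axioms.intro)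
    show "group G" by (rule is_group)
    show "z \<in> carrier G" by (rule zc)
    show "\<And>x. x \<in> carrier G \<Longrightarrow> z \<otimes>\<^bsub>G\<^esub> x = x \<otimes>\<^bsub>G\<^esub> z" by (rule zcomm)
    show "z \<noteq> \<one>\<^bsub>G\<^esub>" by (rule z1)
    show "z \<otimes>\<^bsub>G\<^esub> z = \<one>\<^bsub>G\<^esub>" by (rule zz)
    show "\<And>s. s\<in>S \<Longrightarrow> s \<in> carrier G" unfolding S_def using gc by blast
    show "s \<otimes>\<^bsub>G\<^esub> s = \<one>\<^bsub>G\<^esub>" if "s\<in>S" for s
    proof -
      from that obtain k where k: "k \<in> {1..2*r}" "s = g k" unfolding S_def by (rule imageE)
      show ?thesis using ginv k by simp
    qed
    show "s \<otimes>\<^bsub>G\<^esub> t = t \<otimes>\<^bsub>G\<^esub> s \<otimes>\<^bsub>G\<^esub> z" if "s\<in>S" "t\<in>S" "s\<noteq>t" for s t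
    proof -
      from that(1) obtain k where k: "k \<in> {1..2*r}" "s = g k" unfolding S_def by (rule imageE)
      from that(2) obtain l where l: "l \<in> {1..2*r}" "t = g l" unfolding S_def by (rule imageE)
      have "k \<noteq> l" using k l that(3) by blast
      hence "g k \<otimes>\<^bsub>G\<^esub> g l = g l \<otimes>\<^bsub>G\<^esub> g k \<otimes>\<^bsub>G\<^esub> z" using ganti k(1) l(1) by blast
      thus ?thesis using k l by simp
    qed
  qed
  have aut: "cay_aut G S \<rho>" and r1: "\<rho> \<one>\<^bsub>G\<^esub> = \<one>\<^bsub>G\<^esub>" and rn: "\<forall>w \<in> nbhd G S \<one>\<^bsub>G\<^esub>. \<rho> w = w"
    using assms(7) unfolding stab1_def S_def by auto
  have rS: "\<forall>t\<in>S. \<rho> t = t"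
  proof
    fix t assume t: "t \<in> S"
    have "t \<in> nbhd G S \<one>\<^bsub>G\<^esub>" unfolding nbhd_def cay_adj_def
      using t esx.Sc[OF X t] by force
    thus "\<rho> t = t" using rn by blast
  qed
  have giS: "g i \<in> S" and gjS: "g j \<in> S" unfolding S_def using assms(4,5) by auto
  have gij: "g i \<noteq> g j"
  proof
    assume e: "g i = g j"
    have "g i \<otimes>\<^bsub>G\<^esub> g j = g j \<otimes>\<^bsub>G\<^esub> g i \<otimes>\<^bsub>G\<^esub> z" using ganti assms(4,5,6) by blast
    moreover have "g j \<otimes>\<^bsub>G\<^esub> g j = \<one>\<^bsub>G\<^esub>" using ginv assms(5) by blast
    ultimately have "\<one>\<^bsub>G\<^esub> = \<one>\<^bsub>G\<^esub> \<otimes>\<^bsub>G\<^esub> z" using e by simp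
    thus False using z1 zc by simp
  qed
  have "let u = map \<rho> (cyc8 G z (g i) (g j));
             a = map (\<lambda>k. u ! ((k + 1) mod 8) \<otimes>\<^bsub>G\<^esub> inv\<^bsub>G\<^esub> (u ! k)) [0..<8]
         in set a \<subseteq> S
            \<and> (\<forall>s \<in> S. s \<in> set a \<longrightarrow> count_list a s = 2)
            \<and> distinct (take 4 a) \<and> distinct (drop 4 a)"
    by (rule esx.main[OF X aut r1 rS giS gjS gij assms(8)])
  thus ?thesis unfolding S_def by simp
qed
end
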